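(* Let $a,b,q$ be complex numbers with $q\ne0$, and define $B_{n,k}(a,b)$ ($n\ge k\ge0$) by $$z^k=\sum_{n=k}^\infty B_{n,k}(a,b)\,z^n\frac{(az;q)_n}{(bz;q)_n}\qquad(k\ge0)$$ in $\mathbb{C}[[z]]$. Then for every integer $n\ge1$ (and $0\le k\le n$) and every $t\in\mathbb{C}$, $$B_{n,k}(at,bt)=B_{n,k}(a,b)\,t^{n-k},$$ and $$[z^{n}]\Big\{\frac{(bz;q)_{n-1}}{(az;q)_n}\Big\}=a\sum_{i=0}^{n-1}B_{n-i,1}(a,b)\,q^{(n-i)i}\,[z^{i}]\Big\{\frac{(bz;q)_i}{(az;q)_{i+1}}\Big\}.$$
   Context: $(x;q)_n=\prod_{j=0}^{n-1}(1-xq^j)$ for $n\ge0$, $(x;q)_0=1$; quotients are regarded as formal power series in $z$ and $[z^m]\{f\}$ denotes the coefficient of $z^m$. The family $\{z^n(az;q)_n/(bz;q)_n\}_{n\ge0}$ is a basis of $\mathbb{C}[[z]]$ in the formal sense, so the $B_{n,k}(a,b)$ are uniquely determined. *)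

theory Defs
  imports Complex_Main "HOL-Computational_Algebra.Formal_Power_Series"
begin

definition qpoch_fps :: "complex \<Rightarrow> complex \<Rightarrow> nat \<Rightarrow> complex fps" where
  "qpoch_fps x q n = (\<Prod>j<n. 1 - fps_const (x * q ^ j) * fps_X)"

definition basis_fps :: "complex \<Rightarrow> complex \<Rightarrow> complex \<Rightarrow> nat \<Rightarrow> complex fps" where
  "basis_fps a b q n = fps_X ^ n * qpoch_fps a q n * inverse (qpoch_fps b q n)"

text \<open>Since basis_fps a b q n has order n, the coefficient of z^m of the
  infinite sum is the finite sum over n = k..m.\<close>
definition is_B_family :: "complex \<Rightarrow> complex \<Rightarrow> complex \<Rightarrow> (nat \<Rightarrow> nat \<Rightarrow> complex) \<Rightarrow> bool" where
  "is_B_family a b q B \<longleftrightarrow>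
     (\<forall>k m. fps_nth (fps_X ^ k :: complex fps) m = (\<Sum>n=k..m. B n k * fps_nth (basis_fps a b q n) m))
     \<and> (\<forall>n k. n < k \<longrightarrow> B n k = 0)"

definition Bnk :: "complex \<Rightarrow> complex \<Rightarrow> complex \<Rightarrow> nat \<Rightarrow> nat \<Rightarrow> complex" where
  "Bnk a b q = (THE B. is_B_family a b q B)"

end

theory Submission imports Defs begin
unbundle fps_syntax

lemma qpoch_Suc: "qpoch_fps x q (Suc n) = qpoch_fps x q n * (1 - fps_const (x*q^n) * fps_X)"
  by (simp add: qpoch_fps_def)

lemma qpoch_0: "qpoch_fps x q 0 = 1"
  by (simp add: qpoch_fps_def)

lemma qpoch_nth0 [simp]: "qpoch_fps x q n $ 0 = 1"
  by (induction n) (simp_all add: qpoch_Suc qpoch_0)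

lemma qpoch_add: "qpoch_fps x q (i+j) = qpoch_fps x q i * qpoch_fps (x*q^i) q j"
proof (induction j)
  case 0 then show ?case by (simp add: qpoch_0)
next
  case (Suc j)
  have "x * q ^ (i + j) = x * q^i * q^j" by (simp add: power_add)
  then show ?case using Suc by (simp add: qpoch_Suc mult.assoc del: power_add add: power_add[symmetric])
qed

definition gq :: "complex \<Rightarrow> complex \<Rightarrow> complex \<Rightarrow> nat \<Rightarrow> complex fps" where
  "gq a b q n = qpoch_fps a q n * inverse (qpoch_fps b q n)"

lemma gq_nth0 [simp]: "gq a b q n $ 0 = 1"
  by (simp add: gq_def)

lemma basis_gq: "basis_fps a b q n = fps_X ^ n * gq a b q n"
  by (simp add: basis_fps_def gq_def mult.assoc)

lemma basis_nth: "basis_fps a b q n $ m = (if m < n then 0 else gq a b q n $ (m - n))"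
  by (simp add: basis_gq fps_X_power_mult_nth)

lemma basis_diag [simp]: "basis_fps a b q n $ n = 1"
  by (simp add: basis_nth)

lemma gq_add: "gq a b q (i+j) = gq a b q i * gq (a*q^i) (b*q^i) q j"
  by (simp add: gq_def qpoch_add fps_inverse_mult mult_ac)

lemma basis_add: "basis_fps a b q (i+j) = basis_fps a b q i * basis_fps (a*q^i) (b*q^i) q j"
  by (simp add: basis_gq gq_add power_add mult_ac)

function Bx :: "complex \<Rightarrow> complex \<Rightarrow> complex \<Rightarrow> nat \<Rightarrow> nat \<Rightarrow> complex" where
  "Bx a b q n k = (if n < k then 0 else fps_nth (fps_X ^ k :: complex fps) n
       - (\<Sum>j\<in>{k..<n}. Bx a b q j k * fps_nth (basis_fps a b q j) n))"
  by auto
termination by (relation "measure (\<lambda>(a,b,q,n,k). n)") auto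

declare Bx.simps [simp del]

lemma Bx_family: "is_B_family a b q (Bx a b q)"
  unfolding is_B_family_def
proof (intro conjI allI impI)
  fix n k :: nat assume "n < k" then show "Bx a b q n k = 0" by (simp add: Bx.simps)
next
  fix k m :: nat
  show "fps_nth (fps_X ^ k :: complex fps) m = (\<Sum>n=k..m. Bx a b q n k * fps_nth (basis_fps a b q n) m)"
  proof (cases "m < k")
    case True then show ?thesis by simp
  next
    case False
    then have "{k..m} = insert m {k..<m}" by auto
    then have "(\<Sum>n=k..m. Bx a b q n k * fps_nth (basis_fps a b q n) m)
       = Bx a b q m k + (\<Sum>n\<in>{k..<m}. Bx a b q n k * fps_nth (basis_fps a b q n) m)"
      by simp
    also have "\<dots> = fps_nth (fps_X ^ k :: complex fps) m"
      using False by (subst Bx.simps[of a b q m k]) simp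
    finally show ?thesis by simp
  qed
qed

lemma family_unique:
  assumes "is_B_family a b q B1" "is_B_family a b q B2"
  shows "B1 = B2"
proof (intro ext)
  fix n k
  show "B1 n k = B2 n k"
  proof (induction n rule: less_induct)
    case (less n)
    show ?case
    proof (cases "n < k")
      case True then show ?thesis using assms by (simp add: is_B_family_def)
    next
      case False
      then have e: "{k..n} = insert n {k..<n}" by auto
      have s: "(\<Sum>j\<in>{k..<n}. B1 j k * basis_fps a b q j $ n) = (\<Sum>j\<in>{k..<n}. B2 j k * basis_fps a b q j $ n)"
        using less by (intro sum.cong) auto
      have "fps_nth (fps_X ^ k :: complex fps) n = B1 n k + (\<Sum>j\<in>{k..<n}. B1 j k * basis_fps a b q j $ n)"
        using assms(1) e unfolding is_B_family_def by (metis (no_types, lifting) atLeastLessThan_iff basis_diag finite_atLeastLessThan less_irrefl_nat mult.right_neutral sum.insert)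
      moreover have "fps_nth (fps_X ^ k :: complex fps) n = B2 n k + (\<Sum>j\<in>{k..<n}. B2 j k * basis_fps a b q j $ n)"
        using assms(2) e unfolding is_B_family_def by (metis (no_types, lifting) atLeastLessThan_iff basis_diag finite_atLeastLessThan less_irrefl_nat mult.right_neutral sum.insert)
      ultimately show ?thesis using s by simp
    qed
  qed
qed

lemma Bnk_family: "is_B_family a b q (Bnk a b q)"
  unfolding Bnk_def by (rule theI[of _ "Bx a b q"]) (auto intro: Bx_family family_unique)

lemma Bnk_eqI: "is_B_family a b q B \<Longrightarrow> Bnk a b q = B"
  using Bnk_family family_unique by blast

definition sc :: "complex \<Rightarrow> complex fps \<Rightarrow> complex fps" where
  "sc t f = Abs_fps (\<lambda>n. t^n * f $ n)"

lemma sc_nth [simp]: "sc t f $ n = t^n * f $ n"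
  by (simp add: sc_def)

lemma sc_mult: "sc t (f * g) = sc t f * sc t g"
proof (rule fps_ext)
  fix n
  have "sc t (f * g) $ n = (\<Sum>i=0..n. t^n * (f $ i * g $ (n - i)))"
    by (simp add: fps_mult_nth sum_distrib_left)
  also have "\<dots> = (\<Sum>i=0..n. (t^i * f $ i) * (t^(n-i) * g $ (n - i)))"
  proof (intro sum.cong refl)
    fix i assume "i \<in> {0..n}"
    then have "t^n = t^i * t^(n-i)" by (simp flip: power_add)
    then show "t^n * (f $ i * g $ (n - i)) = (t^i * f $ i) * (t^(n-i) * g $ (n - i))" by simp
  qed
  also have "\<dots> = (sc t f * sc t g) $ n" by (simp add: fps_mult_nth)
  finally show "sc t (f * g) $ n = (sc t f * sc t g) $ n" .
qed

lemma sc_one: "sc t 1 = 1"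
  by (rule fps_ext) simp

lemma sc_lin: "sc t (1 - fps_const c * fps_X) = 1 - fps_const (c * t) * fps_X"
  by (rule fps_ext) (simp add: fps_X_def)

lemma sc_qpoch: "sc t (qpoch_fps x q n) = qpoch_fps (x * t) q n"
proof (induction n)
  case 0 then show ?case by (simp add: qpoch_0 sc_one)
next
  case (Suc n)
  have "x * t * q ^ n = x * q ^ n * t" by simp
  then show ?case by (simp only: qpoch_Suc sc_mult sc_lin Suc)
qed

lemma sc_inverse:
  assumes "f $ 0 \<noteq> 0"
  shows "sc t (inverse f) = inverse (sc t f)"
proof -
  have "sc t f * sc t (inverse f) = sc t (f * inverse f)" by (simp only: sc_mult)
  also have "\<dots> = 1" by (simp only: inverse_mult_eq_1'[OF assms] sc_one)
  finally have h1: "sc t f * sc t (inverse f) = 1" .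
  have "(sc t f) $ 0 \<noteq> 0" using assms by simp
  have "inverse (sc t f) * (sc t f * sc t (inverse f)) = inverse (sc t f)" by (simp only: h1 mult_1_right)
  then have "(inverse (sc t f) * sc t f) * sc t (inverse f) = inverse (sc t f)" by (simp only: mult.assoc)
  with inverse_mult_eq_1[OF \<open>(sc t f) $ 0 \<noteq> 0\<close>] show ?thesis by simp
qed

lemma gq_scale: "gq (a*t) (b*t) q n = sc t (gq a b q n)"
  by (simp add: gq_def sc_mult sc_inverse sc_qpoch)

lemma basis_scale_nth:
  "basis_fps (a*t) (b*t) q n $ m = t^(m-n) * basis_fps a b q n $ m"
  by (simp add: basis_nth gq_scale)

lemma Bnk_scale: "Bnk (a*t) (b*t) q n k = Bnk a b q n k * t^(n-k)"
proof -
  define B where "B = (\<lambda>n k. Bnk a b q n k * t^(n-k))"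
  have F: "is_B_family a b q (Bnk a b q)" by (rule Bnk_family)
  have "is_B_family (a*t) (b*t) q B"
    unfolding is_B_family_def
  proof (intro conjI allI impI)
    fix n k :: nat assume "n < k" then show "B n k = 0" using F by (simp add: B_def is_B_family_def)
  next
    fix k m :: nat
    show "fps_nth (fps_X ^ k :: complex fps) m = (\<Sum>n=k..m. B n k * fps_nth (basis_fps (a*t) (b*t) q n) m)"
    proof (cases "k \<le> m")
      case False then show ?thesis by simp
    next
      case True
      have "(\<Sum>n=k..m. B n k * fps_nth (basis_fps (a*t) (b*t) q n) m)
          = (\<Sum>n=k..m. t^(m-k) * (Bnk a b q n k * fps_nth (basis_fps a b q n) m))"
      proof (intro sum.cong refl)
        fix n assume "n \<in> {k..m}"
        then have "t^(n-k) * t^(m-n) = t^(m-k)" by (simp flip: power_add)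
        then show "B n k * fps_nth (basis_fps (a*t) (b*t) q n) m = t^(m-k) * (Bnk a b q n k * fps_nth (basis_fps a b q n) m)"
          by (simp add: B_def basis_scale_nth mult_ac)
      qed
      also have "\<dots> = t^(m-k) * fps_nth (fps_X ^ k :: complex fps) m"
        using F by (simp add: is_B_family_def sum_distrib_left)
      also have "\<dots> = fps_nth (fps_X ^ k :: complex fps) m"
        by (cases "m = k") (simp_all add: fps_X_power_iff)
      finally show ?thesis by simp
    qed
  qed
  then have "Bnk (a*t) (b*t) q = B" by (rule Bnk_eqI)
  then show ?thesis by (simp add: B_def)
qed

lemma basis_zero: "m < n \<Longrightarrow> basis_fps a b q n $ m = 0"
  by (simp add: basis_nth)

lemma shift_expand:
  "(fps_X * basis_fps a b q i) $ m =
     (\<Sum>n = Suc i..m. Bnk a b q (n-i) 1 * q^((n-i-1)*i) * basis_fps a b q n $ m)"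
proof -
  define a' where "a' = a * q^i"
  define b' where "b' = b * q^i"
  define B' where "B' = (\<lambda>j. Bnk a' b' q j 1)"
  have B'eq: "B' j = Bnk a b q j 1 * q^((j-1)*i)" for j
    by (simp add: B'_def a'_def b'_def Bnk_scale power_mult mult.commute)
  define T where "T = (\<Sum>j=1..m. fps_const (B' j) * basis_fps a' b' q j)"
  have F': "is_B_family a' b' q (Bnk a' b' q)" by (rule Bnk_family)
  have hT: "T $ m' = fps_X $ m'" if "m' \<le> m" for m'
  proof -
    have "T $ m' = (\<Sum>j=1..m. B' j * basis_fps a' b' q j $ m')"
      by (simp add: T_def fps_sum_nth)
    also have "\<dots> = (\<Sum>j=1..m'. B' j * basis_fps a' b' q j $ m')"
      using that by (intro sum.mono_neutral_right) (auto simp: basis_zero)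
    also have "\<dots> = fps_X ^ 1 $ m'"
      using F' unfolding is_B_family_def B'_def by metis
    finally show ?thesis by simp
  qed
  have "(fps_X * basis_fps a b q i) $ m = (basis_fps a b q i * fps_X) $ m"
    by (simp add: mult.commute)
  also have "\<dots> = (\<Sum>l=0..m. basis_fps a b q i $ l * fps_X $ (m - l))"
    by (simp only: fps_mult_nth)
  also have "\<dots> = (\<Sum>l=0..m. basis_fps a b q i $ l * T $ (m - l))"
    by (intro sum.cong refl) (simp add: hT)
  also have "\<dots> = (basis_fps a b q i * T) $ m"
    by (simp only: fps_mult_nth)
  finally have c1: "(fps_X * basis_fps a b q i) $ m = (basis_fps a b q i * T) $ m" .
  have ba: "basis_fps a b q (j+i) = basis_fps a b q i * basis_fps a' b' q j" for j
    using basis_add[of a b q i j] by (simp add: a'_def b'_def add.commute)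
  have "basis_fps a b q i * T = (\<Sum>j=1..m. basis_fps a b q i * (fps_const (B' j) * basis_fps a' b' q j))"
    by (simp add: T_def sum_distrib_left)
  also have "\<dots> = (\<Sum>j=1..m. fps_const (B' j) * basis_fps a b q (j + i))"
    by (intro sum.cong refl) (simp add: ba mult_ac)
  finally have bT: "basis_fps a b q i * T = (\<Sum>j=1..m. fps_const (B' j) * basis_fps a b q (j + i))" .
  have "(fps_X * basis_fps a b q i) $ m = (\<Sum>j=1..m. fps_const (B' j) * basis_fps a b q (j + i)) $ m"
    using c1 bT by simp
  also have "\<dots> = (\<Sum>j=1..m. B' j * basis_fps a b q (j + i) $ m)"
    by (simp add: fps_sum_nth)
  also have "\<dots> = (\<Sum>n=1+i..m+i. B' (n - i) * basis_fps a b q n $ m)"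
    using sum.shift_bounds_cl_nat_ivl[of "\<lambda>n. B' (n - i) * basis_fps a b q n $ m" 1 i m] by simp
  also have "\<dots> = (\<Sum>n=Suc i..m. B' (n - i) * basis_fps a b q n $ m)"
    by (intro sum.mono_neutral_right) (auto simp: basis_zero)
  also have "\<dots> = (\<Sum>n = Suc i..m. Bnk a b q (n-i) 1 * q^((n-i-1)*i) * basis_fps a b q n $ m)"
    by (simp add: B'eq)
  finally show ?thesis .
qed

lemma telestep:
  fixes r A C Vn Vm :: "nat \<Rightarrow> complex"
  assumes hAC: "\<And>j. j \<ge> 1 \<Longrightarrow> C j - \<alpha> * C (j-1) = A j - \<beta> * A (j-1)"
    and hVn: "\<And>i. Vn i = (if i = 0 then r 0 else r i - \<beta> * r (i-1))"
    and hVm: "\<And>i. Vm i = (if i = 0 then r 0 else r i - \<alpha> * r (i-1))"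
  shows "N \<le> M \<Longrightarrow> (\<Sum>i\<le>N. Vn i * A (M-i)) - (\<Sum>i<N. Vm i * C (M-i))
     = r N * A (M-N) - (if N = 0 then 0 else \<alpha> * r (N-1) * C (M-N))"
proof (induction N)
  case 0 then show ?case by (simp add: hVn)
next
  case (Suc N)
  then have IH: "(\<Sum>i\<le>N. Vn i * A (M-i)) - (\<Sum>i<N. Vm i * C (M-i))
     = r N * A (M-N) - (if N = 0 then 0 else \<alpha> * r (N-1) * C (M-N))" by simp
  have j: "C (M-N) - \<alpha> * C (M-N-1) = A (M-N) - \<beta> * A (M-N-1)"
    using hAC[of "M-N"] Suc.prems by simp
  define Z where "Z = (if N = 0 then 0 else \<alpha> * r (N-1))"
  have IH': "(\<Sum>i\<le>N. Vn i * A (M-i)) - (\<Sum>i<N. Vm i * C (M-i)) = r N * A (M-N) - Z * C (M-N)"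
    using IH by (simp add: Z_def)
  have vm: "Vm N = r N - Z" by (simp add: hVm Z_def)
  have vn: "Vn (Suc N) = r (Suc N) - \<beta> * r N" by (simp add: hVn)
  have j': "A (M-N) = C (M-N) - \<alpha> * C (M - Suc N) + \<beta> * A (M - Suc N)"
    using j by (simp add: algebra_simps)
  have s: "(\<Sum>i\<le>Suc N. Vn i * A (M-i)) - (\<Sum>i<Suc N. Vm i * C (M-i))
      = ((\<Sum>i\<le>N. Vn i * A (M-i)) - (\<Sum>i<N. Vm i * C (M-i))) + Vn (Suc N) * A (M - Suc N) - Vm N * C (M - N)"
    by simp
  also have "\<dots> = r N * A (M-N) - Z * C (M-N) + (r (Suc N) - \<beta> * r N) * A (M - Suc N) - (r N - Z) * C (M - N)"
    by (simp only: IH' vm vn)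
  also have "\<dots> = r (Suc N) * A (M - Suc N) - \<alpha> * r N * C (M - Suc N)"
    by (simp only: j') (simp add: algebra_simps)
  finally show ?case by simp
qed

lemma lin_nth: "((f::complex fps) * (1 - fps_const c * fps_X)) $ i = f $ i - (if i = 0 then 0 else c * f $ (i-1))"
proof -
  have "f * (1 - fps_const c * fps_X) = f - f * (fps_const c * fps_X)" by (simp add: right_diff_distrib)
  also have "f * (fps_const c * fps_X) = fps_const c * (f * fps_X)" by (simp add: mult_ac)
  finally have "f * (1 - fps_const c * fps_X) = f - fps_const c * (f * fps_X)" .
  then show ?thesis by simp
qed

lemma lin_inv: "inverse (1 - fps_const c * fps_X) * (1 - fps_const c * fps_X) = (1::complex fps)"
  by (rule inverse_mult_eq_1) simp

definition Wf :: "complex \<Rightarrow> complex \<Rightarrow> complex \<Rightarrow> nat \<Rightarrow> nat \<Rightarrow> complex" where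
  "Wf a b q n m = (\<Sum>i\<le>n. (qpoch_fps b q n * inverse (qpoch_fps a q n)) $ i * gq a b q n $ (m - i))"

lemma step_identity:
  assumes "Suc p \<le> m"
  shows "(qpoch_fps b q p * inverse (qpoch_fps a q (Suc p))) $ (Suc p) * gq a b q (Suc p) $ (m - Suc p)
     - a * q^p * (qpoch_fps b q p * inverse (qpoch_fps a q (Suc p))) $ p * gq a b q p $ (m - Suc p)
     = Wf a b q (Suc p) m - Wf a b q p m"
proof -
  define R where "R = qpoch_fps b q p * inverse (qpoch_fps a q (Suc p))"
  define \<alpha> where "\<alpha> = a * q^p"
  define \<beta> where "\<beta> = b * q^p"
  have Vn: "qpoch_fps b q (Suc p) * inverse (qpoch_fps a q (Suc p)) = R * (1 - fps_const \<beta> * fps_X)"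
    by (simp add: R_def \<beta>_def qpoch_Suc mult_ac)
  have Vm: "qpoch_fps b q p * inverse (qpoch_fps a q p) = R * (1 - fps_const \<alpha> * fps_X)"
  proof -
    have "R * (1 - fps_const \<alpha> * fps_X) = qpoch_fps b q p * inverse (qpoch_fps a q p)
          * (inverse (1 - fps_const \<alpha> * fps_X) * (1 - fps_const \<alpha> * fps_X))"
      by (simp add: R_def \<alpha>_def qpoch_Suc fps_inverse_mult mult_ac)
    then show ?thesis by (simp only: lin_inv mult_1_right)
  qed
  have AC: "gq a b q p * (1 - fps_const \<alpha> * fps_X) = gq a b q (Suc p) * (1 - fps_const \<beta> * fps_X)"
  proof -
    have "gq a b q (Suc p) * (1 - fps_const \<beta> * fps_X) = qpoch_fps a q (Suc p) * inverse (qpoch_fps b q p)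
        * (inverse (1 - fps_const \<beta> * fps_X) * (1 - fps_const \<beta> * fps_X))"
      by (simp add: gq_def \<beta>_def qpoch_Suc fps_inverse_mult mult_ac)
    also have "\<dots> = qpoch_fps a q (Suc p) * inverse (qpoch_fps b q p)" by (simp only: lin_inv mult_1_right)
    also have "\<dots> = gq a b q p * (1 - fps_const \<alpha> * fps_X)"
      by (simp add: gq_def \<alpha>_def qpoch_Suc mult_ac)
    finally show ?thesis by simp
  qed
  have hAC: "(gq a b q p) $ j - \<alpha> * (gq a b q p) $ (j-1) = (gq a b q (Suc p)) $ j - \<beta> * (gq a b q (Suc p)) $ (j-1)"
    if "j \<ge> 1" for j
    using arg_cong[OF AC, of "\<lambda>f. f $ j"] that by (simp add: lin_nth)
  have T: "(\<Sum>i\<le>Suc p. (R * (1 - fps_const \<beta> * fps_X)) $ i * gq a b q (Suc p) $ (m-i))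
       - (\<Sum>i<Suc p. (R * (1 - fps_const \<alpha> * fps_X)) $ i * gq a b q p $ (m-i))
     = R $ (Suc p) * gq a b q (Suc p) $ (m - Suc p) - (if Suc p = 0 then 0 else \<alpha> * R $ (Suc p - 1) * gq a b q p $ (m - Suc p))"
    by (rule telestep[where r="\<lambda>i. R $ i" and A="\<lambda>j. gq a b q (Suc p) $ j" and C="\<lambda>j. gq a b q p $ j"
          and \<beta>=\<beta> and \<alpha>=\<alpha>, OF hAC _ _ assms]) (simp_all add: lin_nth)
  have "Wf a b q (Suc p) m - Wf a b q p m =
     (\<Sum>i\<le>Suc p. (R * (1 - fps_const \<beta> * fps_X)) $ i * gq a b q (Suc p) $ (m-i))
       - (\<Sum>i<Suc p. (R * (1 - fps_const \<alpha> * fps_X)) $ i * gq a b q p $ (m-i))"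
    by (simp only: Wf_def Vn Vm lessThan_Suc_atMost)
  also have "\<dots> = R $ (Suc p) * gq a b q (Suc p) $ (m - Suc p) - \<alpha> * R $ p * gq a b q p $ (m - Suc p)"
    using T by simp
  finally show ?thesis by (simp add: R_def \<alpha>_def mult_ac)
qed

lemma A_identity:
  assumes "1 \<le> m"
  shows "(\<Sum>n=1..m. (qpoch_fps b q (n - 1) * inverse (qpoch_fps a q n)) $ n * basis_fps a b q n $ m)
    = a * (\<Sum>i<m. q^i * (qpoch_fps b q i * inverse (qpoch_fps a q (i + 1))) $ i * (fps_X * basis_fps a b q i) $ m)"
proof -
  have L: "(\<Sum>n=1..m. (qpoch_fps b q (n - 1) * inverse (qpoch_fps a q n)) $ n * basis_fps a b q n $ m)
     = (\<Sum>p<m. (qpoch_fps b q p * inverse (qpoch_fps a q (Suc p))) $ (Suc p) * basis_fps a b q (Suc p) $ m)"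
    by (simp only: One_nat_def sum.atLeast1_atMost_eq) simp
  have "(\<Sum>n=1..m. (qpoch_fps b q (n - 1) * inverse (qpoch_fps a q n)) $ n * basis_fps a b q n $ m)
    - a * (\<Sum>i<m. q^i * (qpoch_fps b q i * inverse (qpoch_fps a q (i + 1))) $ i * (fps_X * basis_fps a b q i) $ m)
    = (\<Sum>p<m. (qpoch_fps b q p * inverse (qpoch_fps a q (Suc p))) $ (Suc p) * basis_fps a b q (Suc p) $ m
        - a * (q^p * (qpoch_fps b q p * inverse (qpoch_fps a q (p + 1))) $ p * (fps_X * basis_fps a b q p) $ m))"
    by (simp only: L sum_distrib_left sum_subtractf)
  also have "\<dots> = (\<Sum>p<m. Wf a b q (Suc p) m - Wf a b q p m)"
  proof (intro sum.cong refl)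
    fix p assume "p \<in> {..<m}"
    then have pm: "Suc p \<le> m" by simp
    have b1: "basis_fps a b q (Suc p) $ m = gq a b q (Suc p) $ (m - Suc p)"
      using pm by (simp add: basis_nth)
    have b2: "(fps_X * basis_fps a b q p) $ m = gq a b q p $ (m - Suc p)"
      using pm by (simp add: basis_nth)
    show "(qpoch_fps b q p * inverse (qpoch_fps a q (Suc p))) $ (Suc p) * basis_fps a b q (Suc p) $ m
        - a * (q^p * (qpoch_fps b q p * inverse (qpoch_fps a q (p + 1))) $ p * (fps_X * basis_fps a b q p) $ m)
        = Wf a b q (Suc p) m - Wf a b q p m"
      unfolding b1 b2 using step_identity[OF pm, of b q a] by (simp add: mult_ac)
  qed
  also have "\<dots> = Wf a b q m m - Wf a b q 0 m"
    by (rule sum_lessThan_telescope)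
  also have "Wf a b q m m = 0"
  proof -
    have one: "qpoch_fps b q m * inverse (qpoch_fps a q m) * gq a b q m = 1"
    proof -
      have "qpoch_fps b q m * inverse (qpoch_fps a q m) * gq a b q m
         = (inverse (qpoch_fps a q m) * qpoch_fps a q m) * (qpoch_fps b q m * inverse (qpoch_fps b q m))"
        by (simp add: gq_def mult_ac)
      also have "\<dots> = 1" by (simp add: inverse_mult_eq_1 inverse_mult_eq_1')
      finally show ?thesis .
    qed
    have "Wf a b q m m = (qpoch_fps b q m * inverse (qpoch_fps a q m) * gq a b q m) $ m"
      by (simp add: Wf_def fps_mult_nth atLeast0AtMost)
    then show ?thesis using one assms by simp
  qed
  also have "Wf a b q 0 m = 0"
    using assms by (simp add: Wf_def gq_def qpoch_0)
  finally show ?thesis by simp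
qed

theorem mainTheorem6:
  fixes a b q t :: complex and n k :: nat
  assumes "q \<noteq> 0" and "1 \<le> n" and "k \<le> n"
  shows "Bnk (a * t) (b * t) q n k = Bnk a b q n k * t ^ (n - k)
    \<and> fps_nth (qpoch_fps b q (n - 1) * inverse (qpoch_fps a q n)) n
        = a * (\<Sum>i<n. Bnk a b q (n - i) 1 * q ^ ((n - i) * i)
                 * fps_nth (qpoch_fps b q i * inverse (qpoch_fps a q (i + 1))) i)"
proof
  show "Bnk (a * t) (b * t) q n k = Bnk a b q n k * t ^ (n - k)" by (rule Bnk_scale)
next
  define e where "e = (\<lambda>n. fps_nth (qpoch_fps b q (n - 1) * inverse (qpoch_fps a q n)) n)"
  define d where "d = (\<lambda>i. fps_nth (qpoch_fps b q i * inverse (qpoch_fps a q (i + 1))) i)"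
  define E where "E = (\<lambda>n. a * (\<Sum>i<n. Bnk a b q (n - i) 1 * q ^ ((n - i) * i) * d i))"
  define bs where "bs = basis_fps a b q"
  have C: "(\<Sum>j=1..m. e j * bs j $ m) = (\<Sum>j=1..m. E j * bs j $ m)" if "1 \<le> m" for m
  proof -
    have "(\<Sum>j=1..m. e j * bs j $ m) = a * (\<Sum>i<m. q^i * d i * (fps_X * bs i) $ m)"
      using A_identity[OF that, of b q a] by (simp add: e_def d_def bs_def)
    also have "\<dots> = (\<Sum>i<m. \<Sum>j = Suc i..m. a * q^i * d i * Bnk a b q (j-i) 1 * q^((j-i-1)*i) * bs j $ m)"
      unfolding bs_def shift_expand by (simp add: sum_distrib_left mult_ac)
    also have "\<dots> = (\<Sum>j\<le>m. \<Sum>i<j. a * q^i * d i * Bnk a b q (j-i) 1 * q^((j-i-1)*i) * bs j $ m)"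
      by (rule sum.nested_swap'[symmetric])
    also have "\<dots> = (\<Sum>j\<le>m. E j * bs j $ m)"
    proof (intro sum.cong refl)
      fix j
      have "(\<Sum>i<j. a * q^i * d i * Bnk a b q (j-i) 1 * q^((j-i-1)*i) * bs j $ m)
          = (\<Sum>i<j. a * (Bnk a b q (j - i) 1 * q ^ ((j - i) * i) * d i) * bs j $ m)"
      proof (intro sum.cong refl)
        fix i assume "i \<in> {..<j}"
        then have "(j - i) * i = (j-i-1)*i + i" by (cases "j - i") auto
        then have "q ^ ((j - i) * i) = q^i * q^((j-i-1)*i)" by (simp add: power_add)
        then show "a * q^i * d i * Bnk a b q (j-i) 1 * q^((j-i-1)*i) * bs j $ m
            = a * (Bnk a b q (j - i) 1 * q ^ ((j - i) * i) * d i) * bs j $ m" by simp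
      qed
      also have "\<dots> = E j * bs j $ m"
        by (simp add: E_def sum_distrib_left sum_distrib_right)
      finally show "(\<Sum>i<j. a * q^i * d i * Bnk a b q (j-i) 1 * q^((j-i-1)*i) * bs j $ m) = E j * bs j $ m" .
    qed
    also have "\<dots> = (\<Sum>j=1..m. E j * bs j $ m)"
    proof -
      have "{..m} = insert 0 {1..m}" by auto
      then show ?thesis by (simp add: E_def)
    qed
    finally show ?thesis .
  qed
  have "e n = E n" using assms(2)
  proof (induction n rule: less_induct)
    case (less n)
    have ins: "{1..n} = insert n {1..<n}" using less.prems by auto
    have s: "(\<Sum>j\<in>{1..<n}. e j * bs j $ n) = (\<Sum>j\<in>{1..<n}. E j * bs j $ n)"
      using less.IH by (intro sum.cong refl) auto
    have "e n + (\<Sum>j\<in>{1..<n}. e j * bs j $ n) = E n + (\<Sum>j\<in>{1..<n}. E j * bs j $ n)"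
      using C[OF less.prems] ins by (simp add: bs_def)
    then show ?case using s by simp
  qed
  then show "fps_nth (qpoch_fps b q (n - 1) * inverse (qpoch_fps a q n)) n
        = a * (\<Sum>i<n. Bnk a b q (n - i) 1 * q ^ ((n - i) * i)
                 * fps_nth (qpoch_fps b q i * inverse (qpoch_fps a q (i + 1))) i)"
    by (simp add: e_def E_def d_def)
qed

end
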